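(* Let $H=(V,E)$ be a finite graph, $p\in(0,1)$, $q>1$, and let $P_{CM}$ be the transition matrix of the CM dynamics on $H$. With $M$, $M^*$ and $T_e$ ($e\in E$) as defined in the context, $$P_{CM}=M\Big(\prod_{e\in E}T_e\Big)M^*.$$
   Context: Configurations are $A\subseteq E$; $c(A)$ is the number of connected components of $(V,A)$. CM dynamics on $H$: from $A$, (i) activate each connected component of $(V,A)$ independently with probability $1/q$; (ii) remove all edges joining two active vertices; (iii) add each edge joining two active vertices independently with probability $p$. Let $\Omega_E=\{A\subseteq E\}$, $\Omega_V=\{0,1\}^V$ (1 = active, 0 = inactive), $\Omega_J=\Omega_V\times\Omega_E$. For $\sigma\in\Omega_V$, $E(\sigma)=\{(u,v)\in E:\sigma(u)=\sigma(v)\}$, and $f(\sigma,A)$ is the number of connected components of $(V,A)$ whose vertices are inactive. Define $M(B,(\sigma,A))=\mathbf 1(A=B)\mathbf 1(A\subseteq E(\sigma))(q-1)^{f(\sigma,A)}q^{-c(A)}$, $M^*((\sigma,A),B)=\mathbf 1(A=B)$, and for $e=(u,v)\in E$, $T_e((\sigma,A),(\tau,B))=\mathbf 1(\sigma=\tau)\cdot t$ where $t=p$ if $B=A\cup\{e\}$ and $\sigma(u)=\sigma(v)=1$; $t=1-p$ if $B=A\setminus\{e\}$ and $\sigma(u)=\sigma(v)=1$; and, if $\sigma(u)=0$ or $\sigma(v)=0$, $t=1$ if $B=A$ and $t=0$ otherwise (and $t=0$ in all other cases, i.e. $T_e$ only changes edge $e$). The $T_e$ commute, so the product order is irrelevant.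 *)

theory Defs
  imports Complex_Main "HOL-Library.FuncSet"
begin

definition conn :: "'v set \<Rightarrow> ('v \<times> 'v) set \<Rightarrow> ('v \<times> 'v) set" where
  "conn V A = {(x,y). x \<in> V \<and> y \<in> V \<and> (x,y) \<in> (A \<union> A\<inverse>)\<^sup>*}"

definition components :: "'v set \<Rightarrow> ('v \<times> 'v) set \<Rightarrow> 'v set set" where
  "components V A = V // conn V A"

definition ncomp :: "'v set \<Rightarrow> ('v \<times> 'v) set \<Rightarrow> nat" where
  "ncomp V A = card (components V A)"

text \<open>Omega_E, Omega_V = {0,1}^V (1 = active), Omega_J = Omega_V x Omega_E.\<close>
definition OmegaE :: "('v \<times> 'v) set \<Rightarrow> ('v \<times> 'v) set set" where
  "OmegaE E = Pow E"

definition OmegaV :: "'v set \<Rightarrow> ('v \<Rightarrow> nat) set" where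
  "OmegaV V = PiE V (\<lambda>_. {0, 1})"

definition OmegaJ :: "'v set \<Rightarrow> ('v \<times> 'v) set \<Rightarrow> (('v \<Rightarrow> nat) \<times> ('v \<times> 'v) set) set" where
  "OmegaJ V E = OmegaV V \<times> OmegaE E"

definition Esig :: "('v \<times> 'v) set \<Rightarrow> ('v \<Rightarrow> nat) \<Rightarrow> ('v \<times> 'v) set" where
  "Esig E \<sigma> = {(u,v) \<in> E. \<sigma> u = \<sigma> v}"

definition finact :: "'v set \<Rightarrow> ('v \<Rightarrow> nat) \<Rightarrow> ('v \<times> 'v) set \<Rightarrow> nat" where
  "finact V \<sigma> A = card {C \<in> components V A. \<forall>v\<in>C. \<sigma> v = 0}"

definition Mmat :: "'v set \<Rightarrow> ('v \<times> 'v) set \<Rightarrow> real \<Rightarrow>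
    ('v \<times> 'v) set \<Rightarrow> (('v \<Rightarrow> nat) \<times> ('v \<times> 'v) set) \<Rightarrow> real" where
  "Mmat V E q B J = (case J of (\<sigma>, A) \<Rightarrow>
     (if A = B then 1 else 0) * (if A \<subseteq> Esig E \<sigma> then 1 else 0)
       * (q - 1) ^ finact V \<sigma> A * q powi (- int (ncomp V A)))"

definition Mstar :: "(('v \<Rightarrow> nat) \<times> ('v \<times> 'v) set) \<Rightarrow> ('v \<times> 'v) set \<Rightarrow> real" where
  "Mstar J B = (if snd J = B then 1 else 0)"

definition Tmat :: "real \<Rightarrow> ('v \<times> 'v) \<Rightarrow>
    (('v \<Rightarrow> nat) \<times> ('v \<times> 'v) set) \<Rightarrow> (('v \<Rightarrow> nat) \<times> ('v \<times> 'v) set) \<Rightarrow> real" where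
  "Tmat p e X Y = (case X of (\<sigma>, A) \<Rightarrow> case Y of (\<tau>, B) \<Rightarrow>
     (if \<sigma> = \<tau> then
        (if \<sigma> (fst e) = 1 \<and> \<sigma> (snd e) = 1 then
           (if B = A \<union> {e} then p else if B = A - {e} then 1 - p else 0)
         else (if B = A then 1 else 0))
      else 0))"

definition matmul :: "'s set \<Rightarrow> ('a \<Rightarrow> 's \<Rightarrow> real) \<Rightarrow> ('s \<Rightarrow> 'b \<Rightarrow> real) \<Rightarrow> 'a \<Rightarrow> 'b \<Rightarrow> real" where
  "matmul S X Y = (\<lambda>a b. \<Sum>c\<in>S. X a c * Y c b)"

definition idmat :: "'s \<Rightarrow> 's \<Rightarrow> real" where
  "idmat a b = (if a = b then 1 else 0)"

definition matprod :: "'s set \<Rightarrow> ('s \<Rightarrow> 's \<Rightarrow> real) list \<Rightarrow> 's \<Rightarrow> 's \<Rightarrow> real" where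
  "matprod S Xs = foldr (matmul S) Xs idmat"

text \<open>Transition matrix of the CM dynamics, written out from steps (i)-(iii):
  sum over activation patterns sigma (constant on components of (V,A); each component is active
  independently with probability 1/q), then edges between two active vertices are removed and
  each such edge of E is added independently with probability p.\<close>
definition Eact :: "('v \<times> 'v) set \<Rightarrow> ('v \<Rightarrow> nat) \<Rightarrow> ('v \<times> 'v) set" where
  "Eact E \<sigma> = {(u,v) \<in> E. \<sigma> u = 1 \<and> \<sigma> v = 1}"

definition PCM :: "'v set \<Rightarrow> ('v \<times> 'v) set \<Rightarrow> real \<Rightarrow> real \<Rightarrow>
    ('v \<times> 'v) set \<Rightarrow> ('v \<times> 'v) set \<Rightarrow> real" where
  "PCM V E p q A B = (\<Sum>\<sigma>\<in>OmegaV V.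
     (if \<forall>C\<in>components V A. \<forall>u\<in>C. \<forall>v\<in>C. \<sigma> u = \<sigma> v then
        (1 / q) ^ card {C \<in> components V A. \<forall>v\<in>C. \<sigma> v = 1}
        * (1 - 1 / q) ^ card {C \<in> components V A. \<forall>v\<in>C. \<sigma> v = 0}
        * (if A - Eact E \<sigma> = B - Eact E \<sigma>
           then p ^ card (B \<inter> Eact E \<sigma>) * (1 - p) ^ card (Eact E \<sigma> - B)
           else 0)
      else 0))"

end

theory Submission
  imports Defs
begin

definition Fm :: "real \<Rightarrow> ('v\<times>'v) list \<Rightarrow> ('v\<Rightarrow>nat) \<Rightarrow> ('v\<times>'v) set \<Rightarrow> ('v\<times>'v) set \<Rightarrow> real" where
  "Fm p es \<sigma> A B = (let S = {e\<in>set es. \<sigma> (fst e) = 1 \<and> \<sigma> (snd e) = 1} in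
     if A - S = B - S then p ^ card (B \<inter> S) * (1-p) ^ card (S - B) else 0)"

lemma matprod_Cons: "matprod S (X # Xs) = matmul S X (matprod S Xs)"
  by (simp add: matprod_def)

lemma finJ: "finite V \<Longrightarrow> E \<subseteq> V \<times> V \<Longrightarrow> finite (OmegaJ V E)"
  unfolding OmegaJ_def OmegaV_def OmegaE_def
  by (auto intro!: finite_PiE finite_cartesian_product intro: finite_subset)

lemma prod_formula:
  assumes "finite V" "E \<subseteq> V \<times> V" "set es \<subseteq> E" "distinct es"
  shows "\<sigma> \<in> OmegaV V \<Longrightarrow> A \<subseteq> E \<Longrightarrow> (\<tau>,B) \<in> OmegaJ V E \<Longrightarrow>
    matprod (OmegaJ V E) (map (Tmat p) es) (\<sigma>,A) (\<tau>,B) = (if \<tau> = \<sigma> then Fm p es \<sigma> A B else 0)"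
  using assms(3,4)
proof (induction es arbitrary: A)
  case Nil
  then show ?case by (auto simp: matprod_def idmat_def Fm_def)
next
  case (Cons e es)
  let ?S = "OmegaJ V E"
  have fin: "finite ?S" using finJ assms(1,2) by blast
  let ?G = "\<lambda>c. matprod ?S (map (Tmat p) es) c (\<tau>,B)"
  have eE: "e \<in> E" and esE: "set es \<subseteq> E" and ne: "e \<notin> set es" and d: "distinct es"
    using Cons.prems by auto
  define S where "S = {e\<in>set es. \<sigma> (fst e) = 1 \<and> \<sigma> (snd e) = 1}"
  have eS: "e \<notin> S" using ne S_def by auto
  have fS: "finite S" unfolding S_def by simp
  have lhs: "matprod ?S (map (Tmat p) (e#es)) (\<sigma>,A) (\<tau>,B) = (\<Sum>c\<in>?S. Tmat p e (\<sigma>,A) c * ?G c)"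
    by (simp add: matprod_Cons matmul_def)
  show ?case
  proof (cases "\<sigma> (fst e) = 1 \<and> \<sigma> (snd e) = 1")
    case True
    have S': "{x\<in>set (e#es). \<sigma> (fst x) = 1 \<and> \<sigma> (snd x) = 1} = insert e S"
      using True S_def by auto
    have T: "\<And>c. Tmat p e (\<sigma>,A) c = (if c = (\<sigma>,A\<union>{e}) then p else 0) + (if c = (\<sigma>,A-{e}) then 1-p else 0)"
      using True by (auto simp: Tmat_def split: prod.splits)
    have m1: "(\<sigma>,A\<union>{e}) \<in> ?S" "(\<sigma>,A-{e}) \<in> ?S"
      using Cons.prems eE by (auto simp: OmegaJ_def OmegaE_def)
    have "(\<Sum>c\<in>?S. Tmat p e (\<sigma>,A) c * ?G c)
       = (\<Sum>c\<in>?S. (if c = (\<sigma>,A\<union>{e}) then p * ?G c else 0)) + (\<Sum>c\<in>?S. (if c = (\<sigma>,A-{e}) then (1-p) * ?G c else 0))"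
      unfolding sum.distrib[symmetric] by (rule sum.cong) (auto simp: T)
    also have "\<dots> = p * ?G (\<sigma>,A\<union>{e}) + (1-p) * ?G (\<sigma>,A-{e})"
      using m1 fin by (simp add: sum.delta)
    also have "\<dots> = (if \<tau> = \<sigma> then p * Fm p es \<sigma> (A\<union>{e}) B + (1-p) * Fm p es \<sigma> (A-{e}) B else 0)"
    proof -
      have "A \<union> {e} \<subseteq> E" "A - {e} \<subseteq> E" using Cons.prems(2) eE by auto
      from this[THEN Cons.IH[OF Cons.prems(1) _ Cons.prems(3) esE d]] show ?thesis by simp
    qed
    also have "\<dots> = (if \<tau> = \<sigma> then Fm p (e#es) \<sigma> A B else 0)"
    proof (cases "e \<in> B")
      case True
      have c1: "((A\<union>{e}) - S = B - S) = (A - insert e S = B - insert e S)" using True eS by blast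
      have c2: "((A-{e}) - S \<noteq> B - S)" using True eS by blast
      have k1: "card (B \<inter> insert e S) = Suc (card (B \<inter> S))" using True eS fS by simp
      have k2: "insert e S - B = S - B" using True by blast
      show ?thesis unfolding Fm_def Let_def S' S_def[symmetric] using c1 c2 k1 k2 by simp
    next
      case False
      have c1: "((A-{e}) - S = B - S) = (A - insert e S = B - insert e S)" using False eS by blast
      have c2: "((A\<union>{e}) - S \<noteq> B - S)" using False eS by blast
      have k1: "B \<inter> insert e S = B \<inter> S" using False by blast
      have k2: "card (insert e S - B) = Suc (card (S - B))"
        using False eS fS by (simp add: insert_Diff_if)
      show ?thesis unfolding Fm_def Let_def S' S_def[symmetric] using c1 c2 k1 k2 by simp
    qed
    finally show ?thesis using lhs by simp
  next
    case False
    have S': "{x\<in>set (e#es). \<sigma> (fst x) = 1 \<and> \<sigma> (snd x) = 1} = S"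
      using False S_def by auto
    have T: "\<And>c. Tmat p e (\<sigma>,A) c = (if c = (\<sigma>,A) then 1 else 0)"
      using False by (auto simp: Tmat_def split: prod.splits)
    have m1: "(\<sigma>,A) \<in> ?S"
      using Cons.prems by (auto simp: OmegaJ_def OmegaE_def)
    have "(\<Sum>c\<in>?S. Tmat p e (\<sigma>,A) c * ?G c) = ?G (\<sigma>,A)"
      using m1 fin by (simp add: T if_distrib[where f="\<lambda>x. x * _"] sum.delta cong: if_cong)
    also have "\<dots> = (if \<tau> = \<sigma> then Fm p (e#es) \<sigma> A B else 0)"
      using Cons.IH[OF Cons.prems(1) Cons.prems(2) Cons.prems(3) esE d]
      unfolding Fm_def Let_def S' S_def[symmetric] by simp
    finally show ?thesis using lhs by simp
  qed
qed

lemma rt_const: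
  assumes "(x,y) \<in> (A \<union> A\<inverse>)\<^sup>*" "\<forall>(u,v)\<in>A. \<sigma> u = \<sigma> v"
  shows "\<sigma> x = \<sigma> y"
  using assms by (induction rule: rtrancl_induct) auto

lemma conn_refl: "x \<in> V \<Longrightarrow> (x,x) \<in> conn V A"
  by (simp add: conn_def)

lemma const_iff:
  assumes "A \<subseteq> E" "E \<subseteq> V \<times> V"
  shows "(A \<subseteq> Esig E \<sigma>) \<longleftrightarrow> (\<forall>C\<in>components V A. \<forall>u\<in>C. \<forall>v\<in>C. \<sigma> u = \<sigma> v)"
proof
  assume h: "A \<subseteq> Esig E \<sigma>"
  hence ed: "\<forall>(u,v)\<in>A. \<sigma> u = \<sigma> v" by (auto simp: Esig_def)
  show "\<forall>C\<in>components V A. \<forall>u\<in>C. \<forall>v\<in>C. \<sigma> u = \<sigma> v"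
  proof (intro ballI)
    fix C u v assume C: "C \<in> components V A" and u: "u \<in> C" and v: "v \<in> C"
    from C obtain x where x: "C = conn V A `` {x}" "x \<in> V"
      unfolding components_def by (auto elim: quotientE)
    have "(x,u) \<in> (A \<union> A\<inverse>)\<^sup>*" "(x,v) \<in> (A \<union> A\<inverse>)\<^sup>*"
      using u v x by (auto simp: conn_def)
    thus "\<sigma> u = \<sigma> v" using rt_const ed by metis
  qed
next
  assume h: "\<forall>C\<in>components V A. \<forall>u\<in>C. \<forall>v\<in>C. \<sigma> u = \<sigma> v"
  show "A \<subseteq> Esig E \<sigma>"
  proof
    fix e assume e: "e \<in> A"
    obtain u v where uv: "e = (u,v)" by fastforce
    have uV: "u \<in> V" "v \<in> V" using e uv assms by auto
    let ?C = "conn V A `` {u}"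
    have C: "?C \<in> components V A" using uV unfolding components_def by (auto intro: quotientI)
    have "u \<in> ?C" using uV by (simp add: conn_refl)
    moreover have "v \<in> ?C" using uV e uv by (auto simp: conn_def)
    ultimately have "\<sigma> u = \<sigma> v" using h C by blast
    thus "e \<in> Esig E \<sigma>" using e uv assms by (auto simp: Esig_def)
  qed
qed

lemma weight:
  fixes q :: real
  assumes "finite V" "A \<subseteq> V \<times> V" "q \<noteq> 0" "\<sigma> \<in> OmegaV V"
    and h: "\<forall>C\<in>components V A. \<forall>u\<in>C. \<forall>v\<in>C. \<sigma> u = \<sigma> v"
  shows "(1 / q) ^ card {C \<in> components V A. \<forall>v\<in>C. \<sigma> v = 1}
        * (1 - 1 / q) ^ card {C \<in> components V A. \<forall>v\<in>C. \<sigma> v = 0}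
     = (q - 1) ^ finact V \<sigma> A * q powi (- int (ncomp V A))"
proof -
  let ?K = "components V A"
  let ?P = "{C \<in> ?K. \<forall>v\<in>C. \<sigma> v = 1}"
  let ?N = "{C \<in> ?K. \<forall>v\<in>C. \<sigma> v = 0}"
  have sub: "?K \<subseteq> Pow V" unfolding components_def quotient_def conn_def by auto
  have fK: "finite ?K" using sub assms(1) finite_subset by blast
  have ne: "\<And>C. C \<in> ?K \<Longrightarrow> \<exists>x\<in>V. x \<in> C \<and> C \<subseteq> V"
  proof -
    fix C assume "C \<in> ?K"
    then obtain x where x: "C = conn V A `` {x}" "x \<in> V"
      unfolding components_def by (auto elim: quotientE)
    thus "\<exists>x\<in>V. x \<in> C \<and> C \<subseteq> V" using conn_refl[of x V A] by (auto simp: conn_def)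
  qed
  have un: "?K = ?P \<union> ?N"
  proof
    show "?K \<subseteq> ?P \<union> ?N"
    proof
      fix C assume C: "C \<in> ?K"
      then obtain x where x: "x \<in> V" "x \<in> C" "C \<subseteq> V" using ne by blast
      have vals: "\<And>v. v \<in> V \<Longrightarrow> \<sigma> v = 0 \<or> \<sigma> v = 1"
        using assms(4) unfolding OmegaV_def by (auto simp: PiE_def Pi_def)
      have "\<forall>v\<in>C. \<sigma> v = \<sigma> x" using h C x by blast
      thus "C \<in> ?P \<union> ?N" using vals[OF x(1)] C by auto
    qed
  qed auto
  have dj: "?P \<inter> ?N = {}" using ne by fastforce
  have c: "ncomp V A = card ?P + card ?N"
  proof -
    have "card (?P \<union> ?N) = card ?P + card ?N"
      by (rule card_Un_disjoint) (use fK dj in auto)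
    moreover have "ncomp V A = card (?P \<union> ?N)" unfolding ncomp_def using un by simp
    ultimately show ?thesis by simp
  qed
  have "(1 / q) ^ card ?P * (1 - 1 / q) ^ card ?N = (q-1) ^ card ?N / q ^ (card ?P + card ?N)"
    using assms(3) by (simp add: power_divide power_add field_simps)
  also have "\<dots> = (q - 1) ^ finact V \<sigma> A * q powi (- int (ncomp V A))"
  proof -
    have pi: "q powi (- int n) = inverse (q ^ n)" for n
      by (simp add: power_int_minus)
    show ?thesis unfolding pi c finact_def by (simp add: divide_inverse)
  qed
  finally show ?thesis .
qed

theorem mainTheorem5:
  fixes V :: "'v set" and E :: "('v \<times> 'v) set" and p q :: real
    and es :: "('v \<times> 'v) list"
  assumes "finite V" and "E \<subseteq> V \<times> V"
    and "0 < p" and "p < 1" and "1 < q"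
    and "distinct es" and "set es = E"
    and "A \<in> OmegaE E" and "B \<in> OmegaE E"
  shows "PCM V E p q A B =
    matmul (OmegaJ V E)
      (matmul (OmegaJ V E) (Mmat V E q) (matprod (OmegaJ V E) (map (Tmat p) es)))
      Mstar A B"
proof -
  let ?J = "OmegaJ V E"
  let ?P = "matprod ?J (map (Tmat p) es)"
  have AE: "A \<subseteq> E" "B \<subseteq> E" using assms(8,9) by (auto simp: OmegaE_def)
  have fJ: "finite ?J" using finJ assms(1,2) by blast
  have fV: "finite (OmegaV V)" unfolding OmegaV_def using assms(1) by (auto intro: finite_PiE)
  have fE: "finite (OmegaE E)" unfolding OmegaE_def using assms(1,2) by (auto intro: finite_subset)
  have inner: "matmul ?J (Mmat V E q) ?P A (\<tau>, B') = Mmat V E q A (\<tau>, A) * Fm p es \<tau> A B'"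
    if J: "(\<tau>, B') \<in> ?J" for \<tau> B'
  proof -
    have tV: "\<tau> \<in> OmegaV V" using J by (simp add: OmegaJ_def)
    have "matmul ?J (Mmat V E q) ?P A (\<tau>, B') =
      (\<Sum>c\<in>?J. if c = (\<tau>, A) then Mmat V E q A (\<tau>, A) * Fm p es \<tau> A B' else 0)"
      unfolding matmul_def
    proof (rule sum.cong)
      fix c assume c: "c \<in> ?J"
      obtain \<sigma> A' where cs: "c = (\<sigma>, A')" by fastforce
      have "\<sigma> \<in> OmegaV V" "A' \<subseteq> E" using c cs by (auto simp: OmegaJ_def OmegaE_def)
      note pf = prod_formula[OF assms(1,2) equalityD1[OF assms(7)] assms(6) this J, of p]
      show "Mmat V E q A c * ?P c (\<tau>, B') =
        (if c = (\<tau>, A) then Mmat V E q A (\<tau>, A) * Fm p es \<tau> A B' else 0)"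
      proof (cases "A' = A \<and> \<sigma> = \<tau>")
        case True
        thus ?thesis using pf cs by simp
      next
        case False
        have z: "Mmat V E q A c * ?P c (\<tau>, B') = 0"
        proof (cases "A' = A")
          case True
          hence "\<sigma> \<noteq> \<tau>" using False by simp
          thus ?thesis using pf cs by simp
        next
          case False
          hence "Mmat V E q A c = 0" using cs by (simp add: Mmat_def)
          thus ?thesis by simp
        qed
        have "c \<noteq> (\<tau>, A)" using False cs by auto
        thus ?thesis using z by simp
      qed
    qed simp
    also have "\<dots> = Mmat V E q A (\<tau>, A) * Fm p es \<tau> A B'"
      using fJ tV AE by (simp add: OmegaJ_def OmegaE_def)
    finally show ?thesis .
  qed
  have "matmul ?J (matmul ?J (Mmat V E q) ?P) Mstar A B =
     (\<Sum>J\<in>?J. case J of (\<tau>, B') \<Rightarrow> (if B' = B then Mmat V E q A (\<tau>, A) * Fm p es \<tau> A B else 0))"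
    unfolding matmul_def[of ?J "matmul ?J (Mmat V E q) ?P"]
  proof (rule sum.cong)
    fix J assume J: "J \<in> ?J"
    obtain \<tau> B' where cs: "J = (\<tau>, B')" by fastforce
    show "matmul ?J (Mmat V E q) ?P A J * Mstar J B =
      (case J of (\<tau>, B') \<Rightarrow> (if B' = B then Mmat V E q A (\<tau>, A) * Fm p es \<tau> A B else 0))"
      using inner[of \<tau> B'] J cs by (auto simp: Mstar_def)
  qed simp
  also have "\<dots> = (\<Sum>\<tau>\<in>OmegaV V. \<Sum>B'\<in>OmegaE E. if B' = B then Mmat V E q A (\<tau>, A) * Fm p es \<tau> A B else 0)"
    unfolding OmegaJ_def by (rule sum.cartesian_product[symmetric])
  also have "\<dots> = (\<Sum>\<tau>\<in>OmegaV V. Mmat V E q A (\<tau>, A) * Fm p es \<tau> A B)"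
    using fE assms(9) by (simp add: sum.delta')
  also have "\<dots> = PCM V E p q A B"
    unfolding PCM_def
  proof (rule sum.cong)
    fix \<sigma> assume s: "\<sigma> \<in> OmegaV V"
    have S: "{e\<in>set es. \<sigma> (fst e) = 1 \<and> \<sigma> (snd e) = 1} = Eact E \<sigma>"
      using assms(7) by (auto simp: Eact_def)
    have AV: "A \<subseteq> V \<times> V" using AE assms(2) by auto
    note ci = const_iff[OF AE(1) assms(2), of \<sigma>]
    note w = weight[OF assms(1) AV _ s]
    show "Mmat V E q A (\<sigma>, A) * Fm p es \<sigma> A B = (if \<forall>C\<in>components V A. \<forall>u\<in>C. \<forall>v\<in>C. \<sigma> u = \<sigma> v then
        (1 / q) ^ card {C \<in> components V A. \<forall>v\<in>C. \<sigma> v = 1}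
        * (1 - 1 / q) ^ card {C \<in> components V A. \<forall>v\<in>C. \<sigma> v = 0}
        * (if A - Eact E \<sigma> = B - Eact E \<sigma>
           then p ^ card (B \<inter> Eact E \<sigma>) * (1 - p) ^ card (Eact E \<sigma> - B)
           else 0)
      else 0)"
    proof (cases "\<forall>C\<in>components V A. \<forall>u\<in>C. \<forall>v\<in>C. \<sigma> u = \<sigma> v")
      case True
      have "A \<subseteq> Esig E \<sigma>" by (rule ci[THEN iffD2, OF True])
      hence M: "Mmat V E q A (\<sigma>, A) = (q - 1) ^ finact V \<sigma> A * q powi (- int (ncomp V A))"
        by (simp add: Mmat_def)
      have q0: "q \<noteq> 0" using assms(5) by simp
      show ?thesis unfolding M w[OF q0 True, symmetric] Fm_def Let_def S
        by (subst if_P[OF True]) simp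
    next
      case False
      have "\<not> A \<subseteq> Esig E \<sigma>" using ci False by blast
      hence M: "Mmat V E q A (\<sigma>, A) = 0" by (simp add: Mmat_def)
      show ?thesis unfolding M by (subst if_not_P[OF False]) simp
    qed
  qed simp
  finally show ?thesis by simp
qed

end
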